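(* Let $(\mathcal{V},g)$ be a finite-dimensional real scalar product space, let $J_1,\dots,J_m$ be skew-adjoint endomorphisms of $\mathcal{V}$ with $J_iJ_j+J_jJ_i=2c_i\delta_{ij}\,\mathrm{id}$ for $1\le i,j\le m$, where $c_i\in\{-1,1\}$, and let $\mu_0,\dots,\mu_m\in\mathbb{R}$. If $(3c_i\mu_i+\mu_0)\mu_i>0$ for all $1\le i\le m$, or $(3c_i\mu_i+\mu_0)\mu_i<0$ for all $1\le i\le m$, then the (semi-Clifford) algebraic curvature tensor $R=\mu_0R^0+\sum_{i=1}^m\mu_iR^{J_i}$ is totally Jacobi-dual.
   Context: A scalar product space is a finite-dimensional real vector space with a nondegenerate symmetric bilinear form $g$; $\varepsilon_X=g(X,X)$. $R^0(X,Y,Z,W)=g(Y,Z)g(X,W)-g(X,Z)g(Y,W)$; for skew-adjoint $J$, $R^J(X,Y,Z,W)=g(JX,Z)g(JY,W)-g(JY,Z)g(JX,W)+2g(JX,Y)g(JZ,W)$. The Jacobi operator is $\mathcal{J}_X(Y)=\sum_{i}\varepsilon_{E_i}R(Y,X,X,E_i)E_i$ for an orthonormal basis $(E_i)$. An eigenvector of $\mathcal{J}_X$ is a nonzero $Y$ with $\mathcal{J}_X(Y)=\lambda Y$, $\lambda\in\mathbb{R}$. $R$ is totally Jacobi-dual if for all $X,Y\in\mathcal{V}$ with $X\neq0$: whenever $Y$ is an eigenvector of $\mathcal{J}_X$, then $X$ is an eigenvector of $\mathcal{J}_Y$. *)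

theory Defs
  imports "HOL-Analysis.Analysis"
begin

text \<open>A scalar product space: the finite-dimensional real vector space is the
type 'a (class euclidean_space; its own inner product is NOT used), and g is a
nondegenerate symmetric bilinear form on it.\<close>

definition scalar_product :: "('a::euclidean_space \<Rightarrow> 'a \<Rightarrow> real) \<Rightarrow> bool" where
  "scalar_product g \<longleftrightarrow> bilinear g \<and> (\<forall>x y. g x y = g y x)
      \<and> (\<forall>x. (\<forall>y. g x y = 0) \<longrightarrow> x = 0)"

definition skew_adjoint :: "('a::euclidean_space \<Rightarrow> 'a \<Rightarrow> real) \<Rightarrow> ('a \<Rightarrow> 'a) \<Rightarrow> bool" where
  "skew_adjoint g J \<longleftrightarrow> linear J \<and> (\<forall>x y. g (J x) y = - g x (J y))"

definition g_orthonormal_basis :: "('a::euclidean_space \<Rightarrow> 'a \<Rightarrow> real) \<Rightarrow> 'a set \<Rightarrow> bool" where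
  "g_orthonormal_basis g B \<longleftrightarrow> finite B \<and> independent B \<and> span B = UNIV
      \<and> (\<forall>e\<in>B. g e e = 1 \<or> g e e = -1)
      \<and> (\<forall>e\<in>B. \<forall>f\<in>B. e \<noteq> f \<longrightarrow> g e f = 0)"

definition R0 :: "('a::euclidean_space \<Rightarrow> 'a \<Rightarrow> real) \<Rightarrow> 'a \<Rightarrow> 'a \<Rightarrow> 'a \<Rightarrow> 'a \<Rightarrow> real" where
  "R0 g X Y Z W = g Y Z * g X W - g X Z * g Y W"

definition RJ :: "('a::euclidean_space \<Rightarrow> 'a \<Rightarrow> real) \<Rightarrow> ('a \<Rightarrow> 'a) \<Rightarrow> 'a \<Rightarrow> 'a \<Rightarrow> 'a \<Rightarrow> 'a \<Rightarrow> real" where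
  "RJ g J X Y Z W = g (J X) Z * g (J Y) W - g (J Y) Z * g (J X) W + 2 * g (J X) Y * g (J Z) W"

definition jacobi_op :: "('a::euclidean_space \<Rightarrow> 'a \<Rightarrow> real) \<Rightarrow> ('a \<Rightarrow> 'a \<Rightarrow> 'a \<Rightarrow> 'a \<Rightarrow> real)
    \<Rightarrow> 'a \<Rightarrow> 'a \<Rightarrow> 'a" where
  "jacobi_op g R X Y = (let B = (SOME B. g_orthonormal_basis g B) in
      (\<Sum>e\<in>B. (g e e * R Y X X e) *\<^sub>R e))"

definition is_eigenvector :: "('a::real_vector \<Rightarrow> 'a) \<Rightarrow> 'a \<Rightarrow> bool" where
  "is_eigenvector f Y \<longleftrightarrow> Y \<noteq> 0 \<and> (\<exists>l::real. f Y = l *\<^sub>R Y)"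

definition totally_jacobi_dual :: "('a::euclidean_space \<Rightarrow> 'a \<Rightarrow> real) \<Rightarrow> ('a \<Rightarrow> 'a \<Rightarrow> 'a \<Rightarrow> 'a \<Rightarrow> real) \<Rightarrow> bool" where
  "totally_jacobi_dual g R \<longleftrightarrow> (\<forall>X Y. X \<noteq> 0 \<longrightarrow>
      is_eigenvector (jacobi_op g R X) Y \<longrightarrow> is_eigenvector (jacobi_op g R Y) X)"

end

theory Submission
  imports Defs
begin

definition ONs :: "('a::euclidean_space \<Rightarrow> 'a \<Rightarrow> real) \<Rightarrow> 'a set \<Rightarrow> bool" where
 "ONs g B \<longleftrightarrow> (\<forall>e\<in>B. g e e = 1 \<or> g e e = -1) \<and> (\<forall>e\<in>B. \<forall>f\<in>B. e \<noteq> f \<longrightarrow> g e f = 0)"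

lemma g_sum_r: assumes "bilinear g" shows "g x (sum f S) = (\<Sum>i\<in>S. g x (f i))"
  using assms unfolding bilinear_def by (simp add: linear_sum)

lemma g_sum_l: assumes "bilinear g" shows "g (sum f S) y = (\<Sum>i\<in>S. g (f i) y)"
proof -
  have "linear (\<lambda>x. g x y)" using assms unfolding bilinear_def by simp
  from linear_sum[OF this] show ?thesis by simp
qed

lemma ON_indep: assumes bil: "bilinear g" and on: "ONs g B" shows "independent B"
  unfolding independent_explicit_finite_subsets
proof (intro allI impI ballI)
  fix S u v assume S: "S \<subseteq> B" "finite S" and su: "(\<Sum>v\<in>S. u v *\<^sub>R v) = 0" and v: "v \<in> S"
  have "0 = g v (\<Sum>w\<in>S. u w *\<^sub>R w)" using su bilinear_rzero[OF bil] by simp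
  also have "\<dots> = (\<Sum>w\<in>S. u w * g v w)" by (simp add: g_sum_r[OF bil] bilinear_rmul[OF bil])
  also have "\<dots> = u v * g v v"
  proof -
    have "\<forall>w\<in>S - {v}. u w * g v w = 0"
    proof
      fix w assume w: "w \<in> S - {v}"
      hence "w \<in> B" "v \<in> B" "v \<noteq> w" using S v by auto
      hence "g v w = 0" using on unfolding ONs_def by blast
      thus "u w * g v w = 0" by simp
    qed
    hence "(\<Sum>w\<in>S - {v}. u w * g v w) = 0" by (rule sum.neutral)
    thus ?thesis by (simp add: sum.remove[OF S(2) v])
  qed
  finally have uv: "0 = u v * g v v" .
  have "g v v \<noteq> 0" using on S v unfolding ONs_def by fastforce
  thus "u v = 0" using uv by simp
qed

lemma aux_div: fixes s x :: real shows "(1 / s) * ((1 / s) * x) = x / (s * s)" by simp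

lemma exists_onb: assumes sp: "scalar_product g" shows "\<exists>B. g_orthonormal_basis g B"
proof -
  have bil: "bilinear g" and sym: "\<And>x y. g x y = g y x" and nd: "\<And>x. (\<forall>y. g x y = 0) \<Longrightarrow> x = 0"
    using sp unfolding scalar_product_def by auto
  have bnd: "ONs g B \<Longrightarrow> finite B \<and> card B \<le> DIM('a)" for B
    using ON_indep[OF bil] independent_bound by blast
  have "\<exists>n. (\<exists>B. ONs g B \<and> card B = n) \<and> (\<forall>k. (\<exists>B. ONs g B \<and> card B = k) \<longrightarrow> k \<le> n)"
  proof -
    have h1: "\<exists>B. ONs g B \<and> card B = 0" by (rule exI[of _ "{}"]) (simp add: ONs_def)
    have h2: "\<forall>y. (\<exists>B. ONs g B \<and> card B = y) \<longrightarrow> y \<le> DIM('a)" using bnd by blast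
    show ?thesis using Nat.ex_has_greatest_nat[where P="\<lambda>n. \<exists>B. ONs g B \<and> card B = n", OF h1 h2] by blast
  qed
  then obtain B where B: "ONs g B" and maxB: "\<And>B'. ONs g B' \<Longrightarrow> card B' \<le> card B" by blast
  have fin: "finite B" and ind: "independent B" using bnd[OF B] ON_indep[OF bil B] by auto
  have gee: "e\<in>B \<Longrightarrow> g e e * g e e = 1" for e using B by (auto simp: ONs_def)
  have gef: "e\<in>B \<Longrightarrow> f\<in>B \<Longrightarrow> e\<noteq>f \<Longrightarrow> g e f = 0" for e f using B by (auto simp: ONs_def)
  define proj where "proj x = (\<Sum>e\<in>B. (g e e * g e x) *\<^sub>R e)" for x
  have gproj: "g f (proj x) = g f x" if f: "f \<in> B" for f x
  proof -
    have "g f (proj x) = (\<Sum>e\<in>B. g e e * g e x * g f e)" unfolding proj_def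
      by (simp add: g_sum_r[OF bil] bilinear_rmul[OF bil])
    also have "\<dots> = g f f * g f x * g f f"
      by (subst sum.remove[OF fin f]) (auto intro!: sum.neutral dest: gef[OF f])
    also have "\<dots> = g f x" using gee[OF f] by (simp add: algebra_simps)
    finally show ?thesis .
  qed
  have projspan: "proj x \<in> span B" for x unfolding proj_def
    apply (rule span_sum) apply (rule span_scale) apply (rule span_base) by simp
  have "span B = UNIV"
  proof (rule ccontr)
    assume "span B \<noteq> UNIV"
    then obtain x where x: "x \<notin> span B" by auto
    define w where "w = x - proj x"
    have w0: "w \<noteq> 0" using x projspan[of x] unfolding w_def by auto
    have wW: "\<forall>f\<in>B. g f w = 0" unfolding w_def using gproj bilinear_rsub[OF bil] by simp
    have "\<exists>v. (\<forall>f\<in>B. g f v = 0) \<and> g v v \<noteq> 0"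
    proof (rule ccontr)
      assume "\<not> ?thesis"
      hence null: "\<And>v. \<forall>f\<in>B. g f v = 0 \<Longrightarrow> g v v = 0" by blast
      have "g w z = 0" for z
      proof -
        define z' where "z' = z - proj z"
        have z'W: "\<forall>f\<in>B. g f z' = 0" unfolding z'_def using gproj bilinear_rsub[OF bil] by simp
        have "\<forall>f\<in>B. g f (w + z') = 0" using wW z'W bilinear_radd[OF bil] by simp
        hence "g (w + z') (w + z') = 0" by (rule null)
        hence "g w w + g w z' + g z' w + g z' z' = 0"
          by (simp add: bilinear_radd[OF bil] bilinear_ladd[OF bil])
        hence wz': "g w z' = 0" using null[OF wW] null[OF z'W] sym[of z' w] by simp
        have "g w (proj z) = 0" unfolding proj_def
          using wW by (simp add: g_sum_r[OF bil] bilinear_rmul[OF bil] sym[of w])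
        moreover have "z = z' + proj z" unfolding z'_def by simp
        ultimately have "g w z = g w z' + g w (proj z)" using bilinear_radd[OF bil] by metis
        thus ?thesis using wz' \<open>g w (proj z) = 0\<close> by simp
      qed
      hence "w = 0" using nd by blast
      thus False using w0 by simp
    qed
    then obtain v where vW: "\<forall>f\<in>B. g f v = 0" and vv: "g v v \<noteq> 0" by blast
    define e where "e = (1 / sqrt \<bar>g v v\<bar>) *\<^sub>R v"
    have ee0: "g e e = (1 / sqrt \<bar>g v v\<bar>) * ((1 / sqrt \<bar>g v v\<bar>) * g v v)" unfolding e_def
      by (simp only: bilinear_rmul[OF bil] bilinear_lmul[OF bil] real_scaleR_def)
    have ss: "sqrt \<bar>g v v\<bar> * sqrt \<bar>g v v\<bar> = \<bar>g v v\<bar>" by simp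
    have "(1 / sqrt \<bar>g v v\<bar>) * ((1 / sqrt \<bar>g v v\<bar>) * g v v) = g v v / (sqrt \<bar>g v v\<bar> * sqrt \<bar>g v v\<bar>)"
      by (rule aux_div)
    hence ee: "g e e = g v v / \<bar>g v v\<bar>" using ee0 ss by simp
    hence ee1: "g e e = 1 \<or> g e e = -1" using vv by (cases "g v v > 0") auto
    have eW: "\<forall>f\<in>B. g f e = 0" unfolding e_def using vW by (simp add: bilinear_rmul[OF bil])
    have eB: "e \<notin> B" using eW ee1 by force
    have "ONs g (insert e B)" using B ee1 eW sym unfolding ONs_def by auto
    hence "card (insert e B) \<le> card B" by (rule maxB)
    thus False using eB fin by simp
  qed
  hence "g_orthonormal_basis g B" using fin ind B unfolding g_orthonormal_basis_def ONs_def by auto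
  thus ?thesis by blast
qed

lemma onb_expand: assumes sp: "scalar_product g" and B: "g_orthonormal_basis g B"
  shows "(\<Sum>e\<in>B. (g e e * g V e) *\<^sub>R e) = V"
proof -
  have bil: "bilinear g" and sym: "\<And>x y. g x y = g y x" and nd: "\<And>x. (\<forall>y. g x y = 0) \<Longrightarrow> x = 0"
    using sp unfolding scalar_product_def by auto
  have fin: "finite B" and sp: "span B = UNIV" using B unfolding g_orthonormal_basis_def by auto
  have gee: "e\<in>B \<Longrightarrow> g e e * g e e = 1" for e using B by (auto simp: g_orthonormal_basis_def)
  have gef: "e\<in>B \<Longrightarrow> f\<in>B \<Longrightarrow> e\<noteq>f \<Longrightarrow> g e f = 0" for e f using B by (auto simp: g_orthonormal_basis_def)
  define d where "d = V - (\<Sum>e\<in>B. (g e e * g V e) *\<^sub>R e)"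
  have "g d f = 0" if f: "f \<in> B" for f
  proof -
    have "g f (\<Sum>e\<in>B. (g e e * g V e) *\<^sub>R e) = (\<Sum>e\<in>B. g e e * g V e * g f e)"
      by (simp add: g_sum_r[OF bil] bilinear_rmul[OF bil])
    also have "\<dots> = g f f * g V f * g f f"
      by (subst sum.remove[OF fin f]) (auto intro!: sum.neutral dest: gef[OF f])
    also have "\<dots> = g f V" using gee[OF f] sym[of f V] by (simp add: algebra_simps)
    finally have e1: "g f (\<Sum>e\<in>B. (g e e * g V e) *\<^sub>R e) = g f V" .
    have "g d f = g f d" by (rule sym)
    also have "\<dots> = g f V - g f (\<Sum>e\<in>B. (g e e * g V e) *\<^sub>R e)" unfolding d_def by (rule bilinear_rsub[OF bil])
    finally show ?thesis using e1 by simp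
  qed
  moreover have "linear (g d)" using bil unfolding bilinear_def by simp
  ultimately have "g d y = 0" for y using linear_eq_0_on_span[of "g d" B y] sp by auto
  hence "d = 0" using nd by blast
  thus ?thesis unfolding d_def by simp
qed


lemma sum_sq_zero:
  fixes t b :: "nat \<Rightarrow> real"
  assumes A: "finite A" and t: "\<forall>j\<in>A. t j > 0" and s: "(\<Sum>j\<in>A. b j * b j * t j) = 0" and i: "i \<in> A"
  shows "b i = 0"
proof -
  have nn: "0 \<le> b j * b j * t j" if "j \<in> A" for j
    using t that by (simp add: mult_nonneg_nonneg less_imp_le)
  have "\<forall>j\<in>A. b j * b j * t j = 0"
    using sum_nonneg_eq_0_iff[OF A, of "\<lambda>j. b j * b j * t j"] nn s by blast
  hence "b i * b i * t i = 0" using i by blast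
  thus ?thesis using t i by force
qed

lemma jac_eq:
  assumes sp: "scalar_product g" and R: "\<And>W. R Y X X W = g V W"
  shows "jacobi_op g R X Y = V"
proof -
  let ?B = "SOME B. g_orthonormal_basis g B"
  have B: "g_orthonormal_basis g ?B" using someI_ex[OF exists_onb[OF sp]] .
  have "jacobi_op g R X Y = (\<Sum>e\<in>?B. (g e e * g V e) *\<^sub>R e)"
    unfolding jacobi_op_def Let_def R ..
  also have "\<dots> = V" by (rule onb_expand[OF sp B])
  finally show ?thesis .
qed

lemma R_formula:
  fixes m :: nat
  assumes bil: "bilinear g" and sym: "\<And>x y. g x y = g y x"
    and sk: "\<And>i x y. i \<in> {1..m} \<Longrightarrow> g (J i x) y = - g x (J i y)"
  shows "\<mu>0 * R0 g Y X X W + (\<Sum>i=1..m. \<mu> i * RJ g (J i) Y X X W)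
     = g (\<mu>0 *\<^sub>R (g X X *\<^sub>R Y - g Y X *\<^sub>R X) + (\<Sum>i=1..m. (3 * \<mu> i * g (J i Y) X) *\<^sub>R J i X)) W"
proof -
  have z: "g (J i X) X = 0" if "i \<in> {1..m}" for i
  proof -
    have "g (J i X) X = - g (J i X) X" using sk[OF that, of X X] sym[of X "J i X"] by simp
    thus ?thesis by simp
  qed
  have "g (\<mu>0 *\<^sub>R (g X X *\<^sub>R Y - g Y X *\<^sub>R X) + (\<Sum>i=1..m. (3 * \<mu> i * g (J i Y) X) *\<^sub>R J i X)) W
      = \<mu>0 * (g X X * g Y W - g Y X * g X W) + (\<Sum>i=1..m. 3 * \<mu> i * g (J i Y) X * g (J i X) W)"
    by (simp add: bilinear_ladd[OF bil] bilinear_lsub[OF bil] bilinear_lmul[OF bil] g_sum_l[OF bil])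
  also have "(\<Sum>i=1..m. 3 * \<mu> i * g (J i Y) X * g (J i X) W) = (\<Sum>i=1..m. \<mu> i * RJ g (J i) Y X X W)"
    by (rule sum.cong[OF refl]) (simp add: RJ_def z algebra_simps)
  finally show ?thesis by (simp add: R0_def)
qed

lemma cliff:
  fixes m :: nat
  assumes lin: "\<And>i. i\<in>{1..m} \<Longrightarrow> linear (J i)"
  and cl: "\<forall>i\<in>{1..m}. \<forall>j\<in>{1..m}. \<forall>x. J i (J j x) + J j (J i x) = (if i = j then 2 * c i else 0) *\<^sub>R x"
  shows "(\<Sum>i=1..m. p i *\<^sub>R J i (\<Sum>j=1..m. p j *\<^sub>R J j v)) = (\<Sum>i=1..m. p i * p i * c i) *\<^sub>R (v::'a::real_vector)"
proof -
  define T where "T = (\<Sum>i=1..m. \<Sum>j=1..m. (p i * p j) *\<^sub>R J i (J j v))"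
  have e1: "(\<Sum>i=1..m. p i *\<^sub>R J i (\<Sum>j=1..m. p j *\<^sub>R J j v)) = T"
    unfolding T_def
  proof (rule sum.cong[OF refl])
    fix i assume i: "i \<in> {1..m}"
    show "p i *\<^sub>R J i (\<Sum>j=1..m. p j *\<^sub>R J j v) = (\<Sum>j=1..m. (p i * p j) *\<^sub>R J i (J j v))"
      by (simp add: linear_sum[OF lin[OF i]] linear_scale[OF lin[OF i]] scaleR_sum_right)
  qed
  have e2: "T = (\<Sum>i=1..m. \<Sum>j=1..m. (p i * p j) *\<^sub>R J j (J i v))"
    unfolding T_def by (subst sum.swap) (simp add: mult.commute)
  have "T + T = (\<Sum>i=1..m. \<Sum>j=1..m. (p i * p j) *\<^sub>R (J i (J j v) + J j (J i v)))"
    by (subst (2) e2) (simp add: T_def sum.distrib[symmetric] scaleR_right_distrib)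
  also have "\<dots> = (\<Sum>i=1..m. \<Sum>j=1..m. if j = i then (p i * p i * 2 * c i) *\<^sub>R v else 0)"
  proof (intro sum.cong[OF refl])
    fix i j assume "i \<in> {1..m}" "j \<in> {1..m}"
    thus "(p i * p j) *\<^sub>R (J i (J j v) + J j (J i v)) = (if j = i then (p i * p i * 2 * c i) *\<^sub>R v else 0)"
      using cl by auto
  qed
  also have "\<dots> = (\<Sum>i=1..m. (p i * p i * 2 * c i) *\<^sub>R v)"
    by (rule sum.cong[OF refl]) (simp add: sum.delta)
  also have "\<dots> = (2::real) *\<^sub>R ((\<Sum>i=1..m. p i * p i * c i) *\<^sub>R v)"
    by (simp add: scaleR_sum_left sum_distrib_left scaleR_sum_right algebra_simps)
  finally have "T + T = (2::real) *\<^sub>R ((\<Sum>i=1..m. p i * p i * c i) *\<^sub>R v)" .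
  hence "T = (\<Sum>i=1..m. p i * p i * c i) *\<^sub>R v"
    by (metis scaleR_2 scaleR_cancel_left zero_neq_numeral)
  thus ?thesis using e1 by simp
qed

theorem mainTheorem6:
  fixes g :: "'a::euclidean_space \<Rightarrow> 'a \<Rightarrow> real"
    and J :: "nat \<Rightarrow> 'a \<Rightarrow> 'a"
    and c :: "nat \<Rightarrow> real"
    and \<mu> :: "nat \<Rightarrow> real"
    and m :: nat
  assumes "scalar_product g"
    and "\<forall>i\<in>{1..m}. skew_adjoint g (J i)"
    and "\<forall>i\<in>{1..m}. c i = 1 \<or> c i = -1"
    and "\<forall>i\<in>{1..m}. \<forall>j\<in>{1..m}. \<forall>x.
           J i (J j x) + J j (J i x) = (if i = j then 2 * c i else 0) *\<^sub>R x"
    and "(\<forall>i\<in>{1..m}. (3 * c i * \<mu> i + \<mu> 0) * \<mu> i > 0)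
       \<or> (\<forall>i\<in>{1..m}. (3 * c i * \<mu> i + \<mu> 0) * \<mu> i < 0)"
  shows "totally_jacobi_dual g
           (\<lambda>X Y Z W. \<mu> 0 * R0 g X Y Z W + (\<Sum>i=1..m. \<mu> i * RJ g (J i) X Y Z W))"
proof -
  have bil: "bilinear g" and sym: "\<And>x y. g x y = g y x"
    using assms(1) unfolding scalar_product_def by auto
  have skA: "skew_adjoint g (J i)" if "i \<in> {1..m}" for i using assms(2) that by blast
  have lin: "\<And>i. i \<in> {1..m} \<Longrightarrow> linear (J i)"
    using skA unfolding skew_adjoint_def by blast
  have sk: "g (J i x) y = - g x (J i y)" if "i \<in> {1..m}" for i x y
  proof -
    have "\<forall>x y. g (J i x) y = - g x (J i y)" using skA[OF that] unfolding skew_adjoint_def by (rule conjunct2)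
    thus ?thesis by blast
  qed
  define R where "R = (\<lambda>X Y Z W. \<mu> 0 * R0 g X Y Z W + (\<Sum>i=1..m. \<mu> i * RJ g (J i) X Y Z W))"
  define V where "V X Y = \<mu> 0 *\<^sub>R (g X X *\<^sub>R Y - g Y X *\<^sub>R X) + (\<Sum>i=1..m. (3 * \<mu> i * g (J i Y) X) *\<^sub>R J i X)" for X Y
  have jac: "jacobi_op g R X Y = V X Y" for X Y
  proof (rule jac_eq[OF assms(1)])
    fix W show "R Y X X W = g (V X Y) W"
      unfolding R_def V_def by (rule R_formula[where J=J and m=m, OF bil sym sk])
  qed
  have main: "\<exists>l'. V Y X = l' *\<^sub>R X" if X0: "X \<noteq> 0" and ev: "V X Y = l *\<^sub>R Y" for X Y l
  proof -
    define b where "b i = g (J i Y) X" for i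
    define Z where "Z v = (\<Sum>i=1..m. (\<mu> i * b i) *\<^sub>R J i v)" for v
    define s where "s = (\<Sum>i=1..m. (\<mu> i * b i) * (\<mu> i * b i) * c i)"
    define gg where "gg = g X Y"
    define k where "k = \<mu> 0 * g X X - l"
    have Zlin: "linear Z"
    proof (rule linearI)
      fix x y show "Z (x + y) = Z x + Z y" unfolding Z_def sum.distrib[symmetric]
      proof (rule sum.cong[OF refl])
        fix i assume i: "i \<in> {1..m}"
        show "(\<mu> i * b i) *\<^sub>R J i (x + y) = (\<mu> i * b i) *\<^sub>R J i x + (\<mu> i * b i) *\<^sub>R J i y"
          using linear_add[OF lin[OF i], of x y] by (simp add: scaleR_right_distrib)
      qed
    next
      fix r x show "Z (r *\<^sub>R x) = r *\<^sub>R Z x" unfolding Z_def scaleR_sum_right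
      proof (rule sum.cong[OF refl])
        fix i assume i: "i \<in> {1..m}"
        show "(\<mu> i * b i) *\<^sub>R J i (r *\<^sub>R x) = r *\<^sub>R (\<mu> i * b i) *\<^sub>R J i x"
          using linear_scale[OF lin[OF i], of r x] by simp
      qed
    qed
    have ZZ: "Z (Z v) = s *\<^sub>R v" for v
      unfolding Z_def s_def by (rule cliff[where J=J and m=m and c=c, OF lin assms(4)])
    have VXY: "V X Y = \<mu> 0 *\<^sub>R (g X X *\<^sub>R Y - gg *\<^sub>R X) + 3 *\<^sub>R Z X"
      unfolding V_def Z_def gg_def b_def by (simp add: sym[of Y X] scaleR_sum_right mult.assoc)
    have bY: "g (J i X) Y = - b i" if "i \<in> {1..m}" for i
      unfolding b_def using sk[OF that, of X Y] sym[of X "J i Y"] by simp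
    have VYX: "V Y X = \<mu> 0 *\<^sub>R (g Y Y *\<^sub>R X - gg *\<^sub>R Y) - 3 *\<^sub>R Z Y"
    proof -
      have "(\<Sum>i=1..m. (3 * \<mu> i * g (J i X) Y) *\<^sub>R J i Y) = - (3 *\<^sub>R Z Y)"
        unfolding Z_def scaleR_sum_right sum_negf[symmetric]
        by (rule sum.cong[OF refl]) (simp add: bY)
      thus ?thesis unfolding V_def gg_def by simp
    qed
    have key: "k *\<^sub>R Y = (\<mu> 0 * gg) *\<^sub>R X - 3 *\<^sub>R Z X"
      using ev unfolding VXY k_def by (simp add: algebra_simps)
    show ?thesis
    proof (cases "k = 0")
      case False
      have kZ: "k *\<^sub>R Z Y = (\<mu> 0 * gg) *\<^sub>R Z X - (3 * s) *\<^sub>R X"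
      proof -
        have "k *\<^sub>R Z Y = Z (k *\<^sub>R Y)" using linear_scale[OF Zlin] by simp
        also have "\<dots> = (\<mu> 0 * gg) *\<^sub>R Z X - 3 *\<^sub>R Z (Z X)"
          unfolding key by (simp add: linear_diff[OF Zlin] linear_scale[OF Zlin])
        finally show ?thesis by (simp add: ZZ)
      qed
      have "k *\<^sub>R V Y X = (k * \<mu> 0 * g Y Y) *\<^sub>R X - (\<mu> 0 * gg) *\<^sub>R (k *\<^sub>R Y) - 3 *\<^sub>R (k *\<^sub>R Z Y)"
        unfolding VYX by (simp add: algebra_simps)
      also have "\<dots> = (k * \<mu> 0 * g Y Y - (\<mu> 0 * gg) * (\<mu> 0 * gg) + 9 * s) *\<^sub>R X"
        unfolding kZ key by (simp add: algebra_simps)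
      finally have kV: "k *\<^sub>R V Y X = (k * \<mu> 0 * g Y Y - (\<mu> 0 * gg) * (\<mu> 0 * gg) + 9 * s) *\<^sub>R X" .
      have "V Y X = (1 / k) *\<^sub>R (k *\<^sub>R V Y X)" using False by simp
      also have "\<dots> = ((k * \<mu> 0 * g Y Y - (\<mu> 0 * gg) * (\<mu> 0 * gg) + 9 * s) / k) *\<^sub>R X"
        unfolding kV by simp
      finally have "V Y X = ((k * \<mu> 0 * g Y Y - (\<mu> 0 * gg) * (\<mu> 0 * gg) + 9 * s) / k) *\<^sub>R X" .
      thus ?thesis by blast
    next
      case True
      have h1: "3 *\<^sub>R Z X = (\<mu> 0 * gg) *\<^sub>R X" using key True by simp
      have "9 *\<^sub>R Z (Z X) = 3 *\<^sub>R Z (3 *\<^sub>R Z X)" by (simp add: linear_scale[OF Zlin])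
      also have "\<dots> = 3 *\<^sub>R Z ((\<mu> 0 * gg) *\<^sub>R X)" by (simp only: h1)
      also have "\<dots> = (\<mu> 0 * gg) *\<^sub>R (3 *\<^sub>R Z X)" by (simp add: linear_scale[OF Zlin])
      also have "\<dots> = ((\<mu> 0 * gg) * (\<mu> 0 * gg)) *\<^sub>R X" by (simp only: h1 scaleR_scaleR)
      finally have "(9 * s) *\<^sub>R X = ((\<mu> 0 * gg) * (\<mu> 0 * gg)) *\<^sub>R X" by (simp add: ZZ)
      hence s9: "9 * s = (\<mu> 0 * gg) * (\<mu> 0 * gg)" using X0 by (simp add: scaleR_cancel_right)
      have gZ: "g (Z X) Y = - (\<Sum>i=1..m. \<mu> i * b i * b i)"
        unfolding Z_def g_sum_l[OF bil] bilinear_lmul[OF bil] sum_negf[symmetric]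
        by (rule sum.cong[OF refl]) (simp add: bY)
      have "g (3 *\<^sub>R Z X) Y = g ((\<mu> 0 * gg) *\<^sub>R X) Y" using h1 by simp
      hence h3: "- 3 * (\<Sum>i=1..m. \<mu> i * b i * b i) = \<mu> 0 * gg * gg"
        unfolding bilinear_lmul[OF bil] gZ by (simp add: gg_def)
      have tot: "(\<Sum>i=1..m. b i * b i * ((3 * c i * \<mu> i + \<mu> 0) * \<mu> i)) = 0"
      proof -
        have "(\<Sum>i=1..m. b i * b i * ((3 * c i * \<mu> i + \<mu> 0) * \<mu> i))
            = 3 * s + \<mu> 0 * (\<Sum>i=1..m. \<mu> i * b i * b i)"
          unfolding s_def sum_distrib_left sum.distrib[symmetric]
          by (rule sum.cong[OF refl]) (simp add: algebra_simps)
        moreover have "\<mu> 0 * (3 * (\<Sum>i=1..m. \<mu> i * b i * b i)) = - (\<mu> 0 * (\<mu> 0 * gg * gg))"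
          using h3 by (metis minus_mult_left minus_mult_right minus_minus)
        hence "3 * (3 * s + \<mu> 0 * (\<Sum>i=1..m. \<mu> i * b i * b i)) = 0"
          using s9 by (simp add: algebra_simps)
        ultimately show ?thesis by simp
      qed
      have b0: "b i = 0" if i: "i \<in> {1..m}" for i
      proof -
        from assms(5) show ?thesis
        proof
          assume pos: "\<forall>i\<in>{1..m}. (3 * c i * \<mu> i + \<mu> 0) * \<mu> i > 0"
          show ?thesis by (rule sum_sq_zero[OF _ pos tot i]) simp
        next
          assume neg: "\<forall>i\<in>{1..m}. (3 * c i * \<mu> i + \<mu> 0) * \<mu> i < 0"
          have neg': "\<forall>i\<in>{1..m}. - ((3 * c i * \<mu> i + \<mu> 0) * \<mu> i) > 0" using neg by simp
          have tot': "(\<Sum>j=1..m. b j * b j * (- ((3 * c j * \<mu> j + \<mu> 0) * \<mu> j))) = 0"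
            using tot by (simp add: sum_negf)
          show ?thesis by (rule sum_sq_zero[OF _ neg' tot' i]) simp
        qed
      qed
      have Z0: "Z v = 0" for v unfolding Z_def by (simp add: b0)
      have "(\<mu> 0 * gg) *\<^sub>R X = 0" using h1 Z0 by simp
      hence mg: "\<mu> 0 * gg = 0" using X0 by simp
      have "V Y X = (\<mu> 0 * g Y Y) *\<^sub>R X"
        unfolding VYX Z0 using mg by (simp add: algebra_simps)
      thus ?thesis by blast
    qed
  qed
  show ?thesis
    unfolding R_def[symmetric] totally_jacobi_dual_def is_eigenvector_def jac
    using main by blast
qed

end
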